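(* Let $p$ be an odd prime and let $G=F\rtimes H$ be a metabelian Frobenius group with Frobenius kernel $F\cong C_p\times C_p$ and cyclic Frobenius complement $H$ of order $m$ dividing $p-1$, such that $G$ has exactly $p+1$ conjugacy classes of subgroups of order $p$. Let $Q_1=\{1\}$, let $Q_2,\dots,Q_{p+2}$ be the $p+1$ subgroups of order $p$ of $F$, and $Q_{p+3}=F$. Then: (a) $N_G(Q_v)=G$ and $N_G(Q_v)/Q_v=G/Q_v$ for every $1\le v\le p+3$; (b) for every $1\le v\le p+2$, $G/Q_v$ is a Frobenius group with Frobenius complement $HQ_v/Q_v\cong H$ and Frobenius kernel $F/Q_v$.
   Context: A Frobenius group with complement $H$: $1\ne H<G$ with $H\cap gHg^{-1}=1$ for all $g\in G\setminus H$; its Frobenius kernel $F=\{1\}\cup(G\setminus\bigcup_g gHg^{-1})$ is a normal subgroup with $G=F\rtimes H$. *)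

theory Defs
  imports "HOL-Algebra.Algebra"
begin

definition conj_set :: "('a, 'b) monoid_scheme \<Rightarrow> 'a \<Rightarrow> 'a set \<Rightarrow> 'a set" where
  "conj_set G g H = g <#\<^bsub>G\<^esub> H #>\<^bsub>G\<^esub> inv\<^bsub>G\<^esub> g"

definition frobenius_complement :: "('a, 'b) monoid_scheme \<Rightarrow> 'a set \<Rightarrow> bool" where
  "frobenius_complement G H \<longleftrightarrow> group G \<and> subgroup H G \<and> H \<noteq> {\<one>\<^bsub>G\<^esub>} \<and> H \<noteq> carrier G \<and>
     (\<forall>g \<in> carrier G - H. H \<inter> conj_set G g H = {\<one>\<^bsub>G\<^esub>})"

definition frobenius_kernel :: "('a, 'b) monoid_scheme \<Rightarrow> 'a set \<Rightarrow> 'a set" where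
  "frobenius_kernel G H = {\<one>\<^bsub>G\<^esub>} \<union> (carrier G - (\<Union>g \<in> carrier G. conj_set G g H))"

definition metabelian :: "('a, 'b) monoid_scheme \<Rightarrow> bool" where
  "metabelian G \<longleftrightarrow> group G \<and> comm_group (G\<lparr>carrier := derived G (carrier G)\<rparr>)"

definition subgroup_classes_of_order :: "('a, 'b) monoid_scheme \<Rightarrow> nat \<Rightarrow> 'a set set set" where
  "subgroup_classes_of_order G n =
     {{conj_set G g Q | g. g \<in> carrier G} | Q. subgroup Q G \<and> card Q = n}"

end

theory Submission
  imports Defs
begin

context group begin

lemma inv_cancel_left [simp]: "x \<in> carrier G \<Longrightarrow> y \<in> carrier G \<Longrightarrow> inv x \<otimes> (x \<otimes> y) = y"
  by (simp add: m_assoc[symmetric])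
lemma cancel_inv_left [simp]: "x \<in> carrier G \<Longrightarrow> y \<in> carrier G \<Longrightarrow> x \<otimes> (inv x \<otimes> y) = y"
  by (simp add: m_assoc[symmetric])

lemma conj_set_eq: "g \<in> carrier G \<Longrightarrow> conj_set G g H = (\<lambda>h. g \<otimes> h \<otimes> inv g) ` H"
  unfolding conj_set_def l_coset_def r_coset_def by auto

lemma mem_conj_iff:
  assumes "g \<in> carrier G" "H \<subseteq> carrier G" "x \<in> carrier G"
  shows "x \<in> conj_set G g H \<longleftrightarrow> inv g \<otimes> x \<otimes> g \<in> H"
proof
  assume "x \<in> conj_set G g H"
  then obtain h where h: "h \<in> H" "x = g \<otimes> h \<otimes> inv g" using assms by (auto simp: conj_set_eq)
  have "inv g \<otimes> x \<otimes> g = h" using h assms by (simp add: m_assoc subsetD)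
  then show "inv g \<otimes> x \<otimes> g \<in> H" using h by simp
next
  assume a: "inv g \<otimes> x \<otimes> g \<in> H"
  have "x = g \<otimes> (inv g \<otimes> x \<otimes> g) \<otimes> inv g" using assms by (simp add: m_assoc)
  then show "x \<in> conj_set G g H" using a assms by (auto simp: conj_set_eq)
qed

lemma card_conj:
  assumes "g \<in> carrier G" "H \<subseteq> carrier G"
  shows "card (conj_set G g H) = card H"
proof -
  have "inj_on (\<lambda>h. g \<otimes> h \<otimes> inv g) H"
    using assms by (auto simp: inj_on_def subsetD)
  then show ?thesis using assms by (simp add: conj_set_eq card_image)
qed

lemma conj_pow:
  assumes "g \<in> carrier G" "h \<in> carrier G"
  shows "(g \<otimes> h \<otimes> inv g) [^] (n::nat) = g \<otimes> h [^] n \<otimes> inv g"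
proof (induction n)
  case 0 then show ?case using assms by simp
next
  case (Suc n)
  have "(g \<otimes> h \<otimes> inv g) [^] Suc n = (g \<otimes> h [^] n \<otimes> inv g) \<otimes> (g \<otimes> h \<otimes> inv g)"
    using Suc by simp
  also have "\<dots> = g \<otimes> (h [^] n \<otimes> h) \<otimes> inv g"
    using assms by (simp add: m_assoc)
  finally show ?case by simp
qed

lemma subgroup_pow_card:
  assumes "subgroup A G" "finite A" "x \<in> A"
  shows "x [^] card A = \<one>"
proof -
  interpret A: group "G\<lparr>carrier := A\<rparr>" using subgroup.subgroup_is_group[OF assms(1) is_group] .
  have "x [^]\<^bsub>G\<lparr>carrier := A\<rparr>\<^esub> order (G\<lparr>carrier := A\<rparr>) = \<one>\<^bsub>G\<lparr>carrier := A\<rparr>\<^esub>"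
    using A.pow_order_eq_1 assms by simp
  then show ?thesis by (simp add: order_def nat_pow_consistent[symmetric])
qed

lemma coprime_pow_one:
  assumes "x \<in> carrier G" "x [^] (a::nat) = \<one>" "x [^] (b::nat) = \<one>" "coprime a b"
  shows "x = \<one>"
proof -
  have "ord x dvd a" "ord x dvd b" using assms pow_eq_id by auto
  then have "ord x dvd gcd a b" by simp
  then have "ord x = 1" using assms(4) by simp
  then show ?thesis using ord_eq_1 assms(1) by simp
qed

lemma prime_subgroup_meet:
  assumes "subgroup A G" "subgroup B G" "finite A" "Factorial_Ring.prime (card A)"
    "x \<in> A" "x \<in> B" "x \<noteq> \<one>"
  shows "A \<subseteq> B"
proof -
  interpret A: group "G\<lparr>carrier := A\<rparr>" using subgroup.subgroup_is_group[OF assms(1) is_group] .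
  have sI: "subgroup (A \<inter> B) G" using subgroups_Inter_pair assms by blast
  have "subgroup (A \<inter> B) (G\<lparr>carrier := A\<rparr>)" using subgroup_incl[OF sI assms(1)] by auto
  from A.lagrange[OF this] have "card (A \<inter> B) dvd card A" unfolding order_def by (metis dvd_triv_right partial_object.select_convs(1) partial_object.surjective partial_object.update_convs(1))
  moreover have "card (A \<inter> B) \<noteq> 1"
  proof
    assume "card (A \<inter> B) = 1"
    moreover have "{\<one>, x} \<subseteq> A \<inter> B" using assms sI subgroup.one_closed by auto
    moreover have "finite (A \<inter> B)" using assms by simp
    ultimately have "card {\<one>, x} \<le> 1" by (metis card_mono)
    then show False using assms(7) by simp
  qed
  ultimately have "card (A \<inter> B) = card A" using assms(4) by (meson prime_nat_iff)
  then have "A \<inter> B = A" using assms(3) by (meson card_subset_eq inf_le1)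
  then show ?thesis by blast
qed


lemma fc_basic:
  assumes "frobenius_complement G H"
  shows "subgroup H G" "H \<subseteq> carrier G" "H \<noteq> {\<one>}" "H \<noteq> carrier G"
    "\<And>a. a \<in> carrier G \<Longrightarrow> a \<notin> H \<Longrightarrow> H \<inter> conj_set G a H = {\<one>}"
  using assms unfolding frobenius_complement_def by (auto dest: subgroup.subset)

lemma fc_fiber:
  assumes fc: "frobenius_complement G H" and x: "x \<in> carrier G" "x \<noteq> \<one>"
    and g0: "g0 \<in> carrier G" "x \<in> conj_set G g0 H"
  shows "{g \<in> carrier G. x \<in> conj_set G g H} = g0 <# H"
proof
  note b = fc_basic[OF fc]
  show "{g \<in> carrier G. x \<in> conj_set G g H} \<subseteq> g0 <# H"
  proof
    fix g assume "g \<in> {g \<in> carrier G. x \<in> conj_set G g H}"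
    then have g: "g \<in> carrier G" "x \<in> conj_set G g H" by auto
    define c where "c = inv g0 \<otimes> g"
    have c: "c \<in> carrier G" using g g0 by (simp add: c_def)
    define y where "y = inv g0 \<otimes> x \<otimes> g0"
    have yH: "y \<in> H" using mem_conj_iff[OF g0(1) b(2) x(1)] g0 by (simp add: y_def)
    have y: "y \<in> carrier G" using y_def x g0 by simp
    have "inv c \<otimes> y \<otimes> c = inv g \<otimes> x \<otimes> g"
      using g g0 x by (simp add: c_def y_def m_assoc inv_mult_group)
    also have "\<dots> \<in> H" using mem_conj_iff[OF g(1) b(2) x(1)] g by simp
    finally have "y \<in> conj_set G c H" using mem_conj_iff[OF c b(2) y] by simp
    have "c \<in> H"
    proof (rule ccontr)
      assume "c \<notin> H"
      then have "y = \<one>" using b(5)[OF c] yH \<open>y \<in> conj_set G c H\<close> by blast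
      have xe: "x = g0 \<otimes> y \<otimes> inv g0" using x g0 by (simp add: y_def m_assoc)
      have "g0 \<otimes> y \<otimes> inv g0 = \<one>" using \<open>y = \<one>\<close> g0 by simp
      then show False using xe x by simp
    qed
    moreover have "g = g0 \<otimes> c" using g g0 by (simp add: c_def)
    ultimately show "g \<in> g0 <# H" unfolding l_coset_def by auto
  qed
next
  note b = fc_basic[OF fc]
  show "g0 <# H \<subseteq> {g \<in> carrier G. x \<in> conj_set G g H}"
  proof
    fix g assume "g \<in> g0 <# H"
    then obtain c where c: "c \<in> H" "g = g0 \<otimes> c" unfolding l_coset_def by auto
    have cc: "c \<in> carrier G" using c b(2) by auto
    have gc: "g \<in> carrier G" using c cc g0 by simp
    have "inv g \<otimes> x \<otimes> g = inv c \<otimes> (inv g0 \<otimes> x \<otimes> g0) \<otimes> c"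
      using c cc g0 x by (simp add: m_assoc inv_mult_group)
    also have "\<dots> \<in> H"
      using mem_conj_iff[OF g0(1) b(2) x(1)] g0 c b(1)
      by (simp add: subgroup.m_closed subgroup.m_inv_closed)
    finally have "x \<in> conj_set G g H" using mem_conj_iff[OF gc b(2) x(1)] by simp
    then show "g \<in> {g \<in> carrier G. x \<in> conj_set G g H}" using gc by simp
  qed
qed

lemma card_lcos:
  assumes "g \<in> carrier G" "H \<subseteq> carrier G"
  shows "card (g <# H) = card H"
proof -
  have "inj_on (\<lambda>h. g \<otimes> h) H" using assms by (auto simp: inj_on_def subsetD)
  moreover have "g <# H = (\<lambda>h. g \<otimes> h) ` H" unfolding l_coset_def by auto
  ultimately show ?thesis by (simp add: card_image)
qed

lemma frob_kernel_card:
  assumes fin: "finite (carrier G)" and fc: "frobenius_complement G H"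
  shows "card (frobenius_kernel G H) * card H = order G"
proof -
  note b = fc_basic[OF fc]
  define U where "U = {x \<in> carrier G. x \<noteq> \<one> \<and> (\<exists>g\<in>carrier G. x \<in> conj_set G g H)}"
  define S where "S = Sigma (carrier G) (\<lambda>g. conj_set G g H - {\<one>})"
  define S' where "S' = Sigma U (\<lambda>x. {g \<in> carrier G. x \<in> conj_set G g H})"
  have finH: "finite H" using fin b(2) finite_subset by auto
  have h1: "card H \<ge> 1" using finH b(1) subgroup.one_closed by (metis One_nat_def Suc_leI card_gt_0_iff empty_iff)
  have conjsub: "\<And>g. g \<in> carrier G \<Longrightarrow> conj_set G g H \<subseteq> carrier G"
    using b(2) by (auto simp: conj_set_eq subsetD)
  have one_conj: "\<And>g. g \<in> carrier G \<Longrightarrow> \<one> \<in> conj_set G g H"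
    using b(1) subgroup.one_closed by (force simp: conj_set_eq)
  have cS: "card S = order G * (card H - 1)"
  proof -
    have "card S = (\<Sum>g\<in>carrier G. card (conj_set G g H - {\<one>}))"
      unfolding S_def using fin conjsub by (subst card_SigmaI) (auto intro: finite_subset)
    also have "\<dots> = (\<Sum>g\<in>carrier G. card H - 1)"
    proof (rule sum.cong)
      fix g assume g: "g \<in> carrier G"
      have "finite (conj_set G g H)" using conjsub[OF g] fin finite_subset by auto
      then show "card (conj_set G g H - {\<one>}) = card H - 1"
        using one_conj[OF g] card_conj[OF g b(2)] by simp
    qed simp
    finally show ?thesis by (simp add: order_def)
  qed
  have cS': "card S' = card U * card H"
  proof -
    have "card S' = (\<Sum>x\<in>U. card {g \<in> carrier G. x \<in> conj_set G g H})"
      unfolding S'_def using fin by (subst card_SigmaI) (auto simp: U_def intro: finite_subset)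
    also have "\<dots> = (\<Sum>x\<in>U. card H)"
    proof (rule sum.cong)
      fix x assume "x \<in> U"
      then obtain g0 where "x \<in> carrier G" "x \<noteq> \<one>" "g0 \<in> carrier G" "x \<in> conj_set G g0 H"
        unfolding U_def by auto
      then show "card {g \<in> carrier G. x \<in> conj_set G g H} = card H"
        using fc_fiber[OF fc] card_lcos b(2) by simp
    qed simp
    finally show ?thesis by simp
  qed
  have "S' = (\<lambda>(g, x). (x, g)) ` S"
    unfolding S_def S'_def U_def using conjsub by auto
  moreover have "inj_on (\<lambda>(g, x). (x, g)) S" by (auto simp: inj_on_def)
  ultimately have "card S' = card S" by (simp add: card_image)
  then have eq: "card U * card H = order G * (card H - 1)" using cS cS' by simp
  have ker: "frobenius_kernel G H = carrier G - U"
    unfolding frobenius_kernel_def U_def using conjsub by auto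
  have Usub: "U \<subseteq> carrier G" unfolding U_def by auto
  have "card (frobenius_kernel G H) = order G - card U"
    unfolding ker order_def using Usub fin by (simp add: card_Diff_subset finite_subset)
  then have "card (frobenius_kernel G H) * card H = order G * card H - card U * card H"
    by (simp add: diff_mult_distrib)
  also have "\<dots> = order G * card H - order G * (card H - 1)" using eq by simp
  also have "\<dots> = order G" using h1 by (simp add: diff_mult_distrib2)
  finally show ?thesis .
qed


lemma conj_subgroup:
  assumes "subgroup Q G" "g \<in> carrier G"
  shows "subgroup (conj_set G g Q) G"
proof -
  have Qc: "Q \<subseteq> carrier G" using assms subgroup.subset by auto
  show ?thesis
  proof
    show "conj_set G g Q \<subseteq> carrier G" using assms Qc by (auto simp: conj_set_eq subsetD)
    show "\<one> \<in> conj_set G g Q" using assms subgroup.one_closed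
      by (force simp: conj_set_eq intro!: image_eqI[where x="\<one>"])
  next
    fix x y assume "x \<in> conj_set G g Q" "y \<in> conj_set G g Q"
    then obtain a b where ab: "a \<in> Q" "b \<in> Q" "x = g \<otimes> a \<otimes> inv g" "y = g \<otimes> b \<otimes> inv g"
      using assms by (auto simp: conj_set_eq)
    have ac: "a \<in> carrier G" "b \<in> carrier G" using ab Qc by auto
    have "x \<otimes> y = g \<otimes> (a \<otimes> b) \<otimes> inv g" using ab ac assms by (simp add: m_assoc)
    moreover have "a \<otimes> b \<in> Q" by (rule subgroup.m_closed[OF assms(1) ab(1) ab(2)])
    ultimately show "x \<otimes> y \<in> conj_set G g Q" using assms by (auto simp: conj_set_eq)
  next
    fix x assume "x \<in> conj_set G g Q"
    then obtain a where ab: "a \<in> Q" "x = g \<otimes> a \<otimes> inv g"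
      using assms by (auto simp: conj_set_eq)
    have ac: "a \<in> carrier G" using ab Qc by auto
    have "inv x = g \<otimes> inv a \<otimes> inv g" using ab ac assms by (simp add: m_assoc inv_mult_group)
    moreover have "inv a \<in> Q" by (rule subgroup.m_inv_closed[OF assms(1) ab(1)])
    ultimately show "inv x \<in> conj_set G g Q" using assms by (auto simp: conj_set_eq)
  qed
qed

lemma conj_conj:
  assumes "Q \<subseteq> carrier G" "a \<in> carrier G" "g \<in> carrier G"
  shows "conj_set G a (conj_set G g Q) = conj_set G (a \<otimes> g) Q"
  using assms by (simp add: conj_set_eq image_image m_assoc inv_mult_group subsetD)

lemma normalizer_eq:
  assumes "Q \<subseteq> carrier G"
  shows "normalizer G Q = {g \<in> carrier G. conj_set G g Q = Q}"
  using assms unfolding normalizer_def stabilizer_def conj_set_def by auto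

lemma normal_conj:
  assumes "N \<lhd> G" "g \<in> carrier G"
  shows "conj_set G g N = N"
proof -
  have N: "subgroup N G" "\<And>x h. x \<in> carrier G \<Longrightarrow> h \<in> N \<Longrightarrow> x \<otimes> h \<otimes> inv x \<in> N"
    using assms normal_inv_iff by auto
  have Nc: "N \<subseteq> carrier G" using subgroup.subset[OF N(1)] .
  show ?thesis
  proof
    show "conj_set G g N \<subseteq> N" using assms N by (auto simp: conj_set_eq)
    show "N \<subseteq> conj_set G g N"
    proof
      fix x assume x: "x \<in> N"
      have "inv g \<otimes> x \<otimes> inv (inv g) \<in> N" using N(2)[of "inv g" x] x assms by simp
      moreover have "x \<in> carrier G" using x Nc by auto
      ultimately show "x \<in> conj_set G g N" using mem_conj_iff[OF assms(2) Nc] assms(2) by auto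
    qed
  qed
qed

lemma normal_normalizer:
  assumes "N \<lhd> G"
  shows "normalizer G N = carrier G"
proof -
  have s: "N \<subseteq> carrier G" using subgroup.subset[OF normal_imp_subgroup[OF assms]] .
  show ?thesis unfolding normalizer_eq[OF s] using normal_conj[OF assms] by auto
qed

lemma pi_mult:
  assumes "Q \<lhd> G" "x \<in> carrier G" "y \<in> carrier G"
  shows "(Q #> x) \<otimes>\<^bsub>G Mod Q\<^esub> (Q #> y) = Q #> (x \<otimes> y)"
  using assms normal.rcos_sum by simp

lemma pi_inv:
  assumes "Q \<lhd> G" "x \<in> carrier G"
  shows "inv\<^bsub>G Mod Q\<^esub> (Q #> x) = Q #> inv x"
proof -
  have "Q #> x \<in> carrier (G Mod Q)" using assms by (simp add: carrier_FactGroup)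
  then have "inv\<^bsub>G Mod Q\<^esub> (Q #> x) = set_inv (Q #> x)" by (rule normal.inv_FactGroup[OF assms(1)])
  also have "\<dots> = Q #> inv x" by (rule normal.rcos_inv[OF assms(1) assms(2)])
  finally show ?thesis .
qed

lemma pi_eq:
  assumes "Q \<lhd> G" "x \<in> carrier G" "y \<in> carrier G"
  shows "(Q #> x = Q #> y) \<longleftrightarrow> x \<otimes> inv y \<in> Q"
proof -
  have sQ: "subgroup Q G" using normal_imp_subgroup[OF assms(1)] .
  have "(Q #> x = Q #> y) \<longleftrightarrow> x \<in> Q #> y"
  proof
    assume "Q #> x = Q #> y"
    then have "Q #> y = Q #> x" by simp
    then show "x \<in> Q #> y" by (rule repr_independenceD[OF sQ assms(2)])
  next
    assume "x \<in> Q #> y"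
    then have "Q #> y = Q #> x" by (rule repr_independence[OF _ assms(3) sQ])
    then show "Q #> x = Q #> y" by simp
  qed
  also have "\<dots> \<longleftrightarrow> x \<otimes> inv y \<in> Q" using subgroup.rcos_module[OF sQ is_group assms(3,2)] .
  finally show ?thesis .
qed

lemma pi_one:
  assumes "Q \<lhd> G"
  shows "Q #> \<one> = Q"
  using coset_mult_one[OF subgroup.subset[OF normal_imp_subgroup[OF assms]]] .

lemma conj_quot:
  assumes "Q \<lhd> G" "g \<in> carrier G" "H \<subseteq> carrier G"
  shows "conj_set (G Mod Q) (Q #> g) ((\<lambda>x. Q #> x) ` H) = (\<lambda>h. Q #> (g \<otimes> h \<otimes> inv g)) ` H"
proof -
  have GQ: "group (G Mod Q)" using assms normal.factorgroup_is_group by blast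
  have "Q #> g \<in> carrier (G Mod Q)" using assms by (simp add: carrier_FactGroup)
  then have "conj_set (G Mod Q) (Q #> g) ((\<lambda>x. Q #> x) ` H) =
     (\<lambda>k. (Q #> g) \<otimes>\<^bsub>G Mod Q\<^esub> k \<otimes>\<^bsub>G Mod Q\<^esub> inv\<^bsub>G Mod Q\<^esub> (Q #> g)) ` ((\<lambda>x. Q #> x) ` H)"
    by (rule group.conj_set_eq[OF GQ])
  also have "\<dots> = (\<lambda>h. Q #> (g \<otimes> h \<otimes> inv g)) ` H"
    unfolding image_image
  proof (rule image_cong[OF refl])
    fix h assume "h \<in> H"
    then have h: "h \<in> carrier G" using assms by auto
    have "inv\<^bsub>G Mod Q\<^esub> (Q #> g) = Q #> inv g" by (rule pi_inv[OF assms(1,2)])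
    moreover have "(Q #> g) \<otimes>\<^bsub>G Mod Q\<^esub> (Q #> h) = Q #> (g \<otimes> h)" by (rule pi_mult[OF assms(1,2) h])
    moreover have "(Q #> (g \<otimes> h)) \<otimes>\<^bsub>G Mod Q\<^esub> (Q #> inv g) = Q #> (g \<otimes> h \<otimes> inv g)"
      by (rule pi_mult[OF assms(1)]) (use assms h in auto)
    ultimately show "(Q #> g) \<otimes>\<^bsub>G Mod Q\<^esub> (Q #> h) \<otimes>\<^bsub>G Mod Q\<^esub> inv\<^bsub>G Mod Q\<^esub> (Q #> g) = Q #> (g \<otimes> h \<otimes> inv g)"
      by simp
  qed
  finally show ?thesis .
qed
end

locale frobL = group G for G :: "('a, 'b) monoid_scheme" (structure) +
  fixes H :: "'a set" and p m :: nat
  assumes prime: "Factorial_Ring.prime p" and fin: "finite (carrier G)"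
    and fc: "frobenius_complement G H"
    and iso: "G\<lparr>carrier := frobenius_kernel G H\<rparr> \<cong> integer_mod_group p \<times>\<times> integer_mod_group p"
    and cardH: "card H = m" and mdvd: "m dvd p - 1"
    and classes: "card (subgroup_classes_of_order G p) = p + 1"
begin

abbreviation "F \<equiv> frobenius_kernel G H"

lemmas b = fc_basic[OF fc]

lemma F_sub: "F \<subseteq> carrier G"
  unfolding frobenius_kernel_def by auto

lemma finF: "finite F" using fin F_sub finite_subset by auto

lemma finH: "finite H" using fin b(2) finite_subset by auto

lemma p_gt1: "p > 1" using prime prime_gt_1_nat by blast

lemma cardF: "card F = p * p"
proof -
  have "card (carrier (G\<lparr>carrier := F\<rparr>)) = card (carrier (integer_mod_group p \<times>\<times> integer_mod_group p))"
    using iso_same_card[OF iso] .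
  then show ?thesis using p_gt1 by (simp add: carrier_integer_mod_group card_cartesian_product)
qed

lemma m_pos: "m > 0"
  using cardH finH b(1) subgroup.one_closed card_gt_0_iff by blast

lemma coprime_pm: "coprime p m"
proof -
  have "m \<le> p - 1" using mdvd p_gt1 by (simp add: dvd_imp_le)
  then have "m < p" using p_gt1 by simp
  then have "\<not> p dvd m" using m_pos by (meson dvd_imp_le not_le)
  then show ?thesis using prime prime_imp_coprime by blast
qed

lemma coprime_ppm: "coprime (p * p) m" using coprime_pm by simp

lemma orderG: "order G = p * p * m"
  using frob_kernel_card[OF fin fc] cardF cardH by simp

lemma not_conj:
  assumes "x \<in> carrier G" "x [^] (k::nat) = \<one>" "coprime k m" "g \<in> carrier G" "x \<in> conj_set G g H"
  shows "x = \<one>"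
proof -
  obtain h where h: "h \<in> H" "x = g \<otimes> h \<otimes> inv g" using assms(4,5) by (auto simp: conj_set_eq)
  have hc: "h \<in> carrier G" using h b(2) by auto
  have "h [^] m = \<one>" using subgroup_pow_card[OF b(1) finH h(1)] cardH by simp
  then have "x [^] m = \<one>" using h hc assms(4) by (simp add: conj_pow)
  then show ?thesis using coprime_pow_one[OF assms(1,2)] assms(3) by blast
qed

lemma F_char: "F = {x \<in> carrier G. x [^] (p * p) = \<one>}"
proof -
  have "order G = (p ^ 2) * m" using orderG by (simp add: power2_eq_square)
  then obtain P where P: "subgroup P G" "card P = p ^ 2"
    using sylow_thm[OF prime is_group _ fin] by blast
  have finP: "finite P" using P(1) fin subgroup.subset finite_subset by blast
  have Pc: "P \<subseteq> carrier G" using subgroup.subset[OF P(1)] .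
  have inF: "x \<in> F" if "x \<in> carrier G" "x [^] (p * p) = \<one>" for x
  proof (cases "x = \<one>")
    case True then show ?thesis unfolding frobenius_kernel_def by simp
  next
    case False
    have "x \<notin> conj_set G g H" if "g \<in> carrier G" for g
      using not_conj[OF \<open>x \<in> carrier G\<close> \<open>x [^] (p * p) = \<one>\<close> coprime_ppm that] False by blast
    then show ?thesis using \<open>x \<in> carrier G\<close> unfolding frobenius_kernel_def by blast
  qed
  have "P \<subseteq> F"
  proof
    fix x assume "x \<in> P"
    then have "x [^] (p * p) = \<one>" using subgroup_pow_card[OF P(1) finP] P(2) by (simp add: power2_eq_square)
    then show "x \<in> F" using inF \<open>x \<in> P\<close> Pc by blast
  qed
  moreover have "card P = card F" using P(2) cardF by (simp add: power2_eq_square)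
  ultimately have PF: "P = F" using finF card_subset_eq by blast
  show ?thesis
  proof
    show "F \<subseteq> {x \<in> carrier G. x [^] (p * p) = \<one>}"
      using subgroup_pow_card[OF P(1) finP] P(2) PF[symmetric] Pc by (auto simp: power2_eq_square)
    show "{x \<in> carrier G. x [^] (p * p) = \<one>} \<subseteq> F" using inF by blast
  qed
qed

lemma F_subgroup: "subgroup F G"
proof -
  have "order G = (p ^ 2) * m" using orderG by (simp add: power2_eq_square)
  then obtain P where P: "subgroup P G" "card P = p ^ 2"
    using sylow_thm[OF prime is_group _ fin] by blast
  have finP: "finite P" using P(1) fin subgroup.subset finite_subset by blast
  have "P \<subseteq> F"
  proof
    fix x assume "x \<in> P"
    then show "x \<in> F" using subgroup_pow_card[OF P(1) finP] P(2) subgroup.subset[OF P(1)]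
      by (auto simp: F_char power2_eq_square)
  qed
  moreover have "card P = card F" using P(2) cardF by (simp add: power2_eq_square)
  ultimately have PF: "P = F" using finF card_subset_eq by blast
  then show ?thesis using P(1) by simp
qed

lemma F_normal: "F \<lhd> G"
proof -
  have "x \<otimes> f \<otimes> inv x \<in> F" if "x \<in> carrier G" "f \<in> F" for x f
  proof -
    have f: "f \<in> carrier G" "f [^] (p * p) = \<one>" using that(2) F_char by auto
    have "(x \<otimes> f \<otimes> inv x) [^] (p * p) = \<one>" using conj_pow[OF that(1) f(1)] f that(1) by simp
    then show ?thesis using F_char that f by simp
  qed
  then show ?thesis using normal_inv_iff F_subgroup by blast
qed

lemma HF: "H \<inter> F = {\<one>}"
proof -
  have "h = \<one>" if "h \<in> H" "h \<in> F" for h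
  proof -
    have h: "h \<in> carrier G" "h [^] (p * p) = \<one>" using that(2) F_char by auto
    have "h [^] m = \<one>" using subgroup_pow_card[OF b(1) finH that(1)] cardH by simp
    then show ?thesis using coprime_pow_one[OF h] coprime_ppm by blast
  qed
  moreover have "\<one> \<in> H" "\<one> \<in> F" using b(1) subgroup.one_closed F_char by auto
  ultimately show ?thesis by blast
qed

lemma ordp_in_F:
  assumes "subgroup Q G" "card Q = p"
  shows "Q \<subseteq> F"
proof
  fix x assume x: "x \<in> Q"
  have fQ: "finite Q" by (rule finite_subset[OF subgroup.subset[OF assms(1)] fin])
  have xc: "x \<in> carrier G" using x subgroup.subset[OF assms(1)] by auto
  have "x [^] p = \<one>" using subgroup_pow_card[OF assms(1) fQ x] assms(2) by simp
  then have "x [^] (p * p) = \<one>" using nat_pow_pow[OF xc, of p p, symmetric] by simp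
  then show "x \<in> F" using F_char xc by simp
qed

lemma finQ: "subgroup Q G \<Longrightarrow> finite Q"
  by (rule finite_subset[OF subgroup.subset fin])

lemma cardF1: "card (F - {\<one>}) = p * p - 1"
proof -
  have "\<one> \<in> F" using subgroup.one_closed[OF F_subgroup] .
  then show ?thesis using cardF finF by (simp add: card_Diff_singleton)
qed

abbreviation "S \<equiv> {Q. subgroup Q G \<and> card Q = p}"
definition cls where "cls Q = {conj_set G g Q | g. g \<in> carrier G}"

lemma classes_eq: "subgroup_classes_of_order G p = cls ` S"
  unfolding subgroup_classes_of_order_def cls_def by auto

lemma S_meet:
  assumes "Q1 \<in> S" "Q2 \<in> S" "x \<in> Q1" "x \<in> Q2" "x \<noteq> \<one>"
  shows "Q1 = Q2"
proof -
  have f1: "finite Q1" "finite Q2" using assms(1,2) finQ by auto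
  have "Q1 \<subseteq> Q2" using prime_subgroup_meet[of Q1 Q2 x] assms f1 prime by auto
  moreover have "Q2 \<subseteq> Q1" using prime_subgroup_meet[of Q2 Q1 x] assms f1 prime by auto
  ultimately show ?thesis by blast
qed

lemma finS: "finite S"
proof -
  have "S \<subseteq> Pow (carrier G)" using subgroup.subset by auto
  then show ?thesis using fin finite_subset by blast
qed

lemma union_S:
  "card (\<Union>Q\<in>S. Q - {\<one>}) = card S * (p - 1)" "(\<Union>Q\<in>S. Q - {\<one>}) \<subseteq> F - {\<one>}"
proof -
  have "card (\<Union>Q\<in>S. Q - {\<one>}) = (\<Sum>Q\<in>S. card (Q - {\<one>}))"
  proof (rule card_UN_disjoint[OF finS])
    show "\<forall>Q\<in>S. finite (Q - {\<one>})" using finQ by auto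
    show "\<forall>Q1\<in>S. \<forall>Q2\<in>S. Q1 \<noteq> Q2 \<longrightarrow> (Q1 - {\<one>}) \<inter> (Q2 - {\<one>}) = {}"
    proof (intro ballI impI)
      fix Q1 Q2 assume q: "Q1 \<in> S" "Q2 \<in> S" "Q1 \<noteq> Q2"
      show "(Q1 - {\<one>}) \<inter> (Q2 - {\<one>}) = {}"
      proof (rule ccontr)
        assume "(Q1 - {\<one>}) \<inter> (Q2 - {\<one>}) \<noteq> {}"
        then obtain x where "x \<in> Q1" "x \<in> Q2" "x \<noteq> \<one>" by blast
        then have "Q1 = Q2" using S_meet[OF q(1,2)] by simp
        then show False using q(3) by simp
      qed
    qed
  qed
  also have "\<dots> = (\<Sum>Q\<in>S. p - 1)"
  proof (rule sum.cong[OF refl])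
    fix Q assume Q: "Q \<in> S"
    then have "finite Q" using finQ by simp
    moreover have "\<one> \<in> Q" using Q by (simp add: subgroup.one_closed)
    ultimately show "card (Q - {\<one>}) = p - 1" using Q by simp
  qed
  finally show "card (\<Union>Q\<in>S. Q - {\<one>}) = card S * (p - 1)" by simp
  show "(\<Union>Q\<in>S. Q - {\<one>}) \<subseteq> F - {\<one>}"
  proof
    fix x assume "x \<in> (\<Union>Q\<in>S. Q - {\<one>})"
    then obtain Q where Q: "Q \<in> S" "x \<in> Q" "x \<noteq> \<one>" by blast
    have "Q \<subseteq> F" using Q(1) ordp_in_F by simp
    then show "x \<in> F - {\<one>}" using Q by blast
  qed
qed

lemma cardS: "card S = p + 1"
proof -
  have "card (\<Union>Q\<in>S. Q - {\<one>}) \<le> card (F - {\<one>})" by (rule card_mono[OF _ union_S(2)]) (simp add: finF)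
  then have "card S * (p - 1) \<le> p * p - 1" using union_S(1) cardF1 by simp
  also have "p * p - 1 = (p + 1) * (p - 1)" using p_gt1 by (simp add: algebra_simps)
  finally have "card S * (p - 1) \<le> (p + 1) * (p - 1)" .
  moreover have "0 < p - 1" using p_gt1 by simp
  ultimately have "card S \<le> p + 1" by (rule mult_right_le_imp_le)
  moreover have "card (cls ` S) \<le> card S" using card_image_le[OF finS] .
  ultimately show ?thesis using classes classes_eq by simp
qed

lemma inj_cls: "inj_on cls S"
proof -
  have "card (cls ` S) = card S" using cardS classes classes_eq by simp
  then show ?thesis using eq_card_imp_inj_on[OF finS] by blast
qed

lemma S_cover:
  assumes "f \<in> F" "f \<noteq> \<one>"
  shows "\<exists>R\<in>S. f \<in> R"
proof -
  have "card (F - {\<one>}) = p * p - 1" by (rule cardF1)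
  also have "p * p - 1 = (p + 1) * (p - 1)" using p_gt1 by (simp add: algebra_simps)
  finally have "card (\<Union>Q\<in>S. Q - {\<one>}) = card (F - {\<one>})" using union_S(1) cardS by simp
  then have "(\<Union>Q\<in>S. Q - {\<one>}) = F - {\<one>}" using card_subset_eq[OF _ union_S(2)] finF by blast
  then show ?thesis using assms by blast
qed

lemma S_normal:
  assumes Q: "Q \<in> S"
  shows "Q \<lhd> G"
proof -
  have sQ: "subgroup Q G" using Q by simp
  have Qc: "Q \<subseteq> carrier G" using subgroup.subset[OF sQ] .
  have conjQ: "conj_set G g Q = Q" if g: "g \<in> carrier G" for g
  proof -
    let ?Q' = "conj_set G g Q"
    have "?Q' \<in> S" using conj_subgroup[OF sQ g] card_conj[OF g Qc] Q by simp
    moreover have "cls ?Q' = cls Q"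
    proof
      show "cls ?Q' \<subseteq> cls Q"
      proof
        fix Cl assume "Cl \<in> cls ?Q'"
        then obtain a where a: "a \<in> carrier G" "Cl = conj_set G a ?Q'" unfolding cls_def by auto
        then have "Cl = conj_set G (a \<otimes> g) Q" using conj_conj[OF Qc a(1) g] by simp
        moreover have "a \<otimes> g \<in> carrier G" using a g by simp
        ultimately show "Cl \<in> cls Q" unfolding cls_def by blast
      qed
      show "cls Q \<subseteq> cls ?Q'"
      proof
        fix Cl assume "Cl \<in> cls Q"
        then obtain a where a: "a \<in> carrier G" "Cl = conj_set G a Q" unfolding cls_def by auto
        have "conj_set G (a \<otimes> inv g) ?Q' = conj_set G a Q"
          using conj_conj[OF Qc _ g, of "a \<otimes> inv g"] a g by (simp add: m_assoc)
        then have "Cl = conj_set G (a \<otimes> inv g) ?Q'" using a by simp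
        moreover have "a \<otimes> inv g \<in> carrier G" using a g by simp
        ultimately show "Cl \<in> cls ?Q'" unfolding cls_def by blast
      qed
    qed
    ultimately show ?thesis using inj_cls Q by (meson inj_onD)
  qed
  have "x \<otimes> h \<otimes> inv x \<in> Q" if "x \<in> carrier G" "h \<in> Q" for x h
    using conjQ[OF that(1)] that by (auto simp: conj_set_eq)
  then show ?thesis using normal_inv_iff sQ by blast
qed

lemma decomp:
  assumes g: "g \<in> carrier G"
  shows "\<exists>f\<in>F. \<exists>h\<in>H. g = f \<otimes> h"
proof -
  let ?mu = "\<lambda>(f, h). f \<otimes> h"
  have Fc: "F \<subseteq> carrier G" by (rule F_sub)
  have inj: "inj_on ?mu (F \<times> H)"
  proof (rule inj_onI, clarify)
    fix f1 h1 f2 h2 assume a: "f1 \<in> F" "h1 \<in> H" "f2 \<in> F" "h2 \<in> H" "f1 \<otimes> h1 = f2 \<otimes> h2"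
    have c: "f1 \<in> carrier G" "f2 \<in> carrier G" "h1 \<in> carrier G" "h2 \<in> carrier G"
      using a Fc b(2) by auto
    have "inv f2 \<otimes> f1 = inv f2 \<otimes> (f1 \<otimes> h1) \<otimes> inv h1" using c by (simp add: m_assoc)
    also have "\<dots> = h2 \<otimes> inv h1" using a(5) c by (simp add: m_assoc)
    finally have e: "inv f2 \<otimes> f1 = h2 \<otimes> inv h1" .
    have "inv f2 \<otimes> f1 \<in> F" using a F_subgroup by (simp add: subgroup.m_closed subgroup.m_inv_closed)
    moreover have "h2 \<otimes> inv h1 \<in> H" using a b(1) by (simp add: subgroup.m_closed subgroup.m_inv_closed)
    ultimately have "h2 \<otimes> inv h1 \<in> H \<inter> F" using e by simp
    then have e1: "h2 \<otimes> inv h1 = \<one>" using HF by simp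
    have "h2 = (h2 \<otimes> inv h1) \<otimes> h1" using c by (simp add: m_assoc)
    then have "h2 = h1" using e1 c by simp
    moreover then have "f1 = f2" using a(5) c by simp
    ultimately show "f1 = f2 \<and> h1 = h2" by simp
  qed
  have sub: "?mu ` (F \<times> H) \<subseteq> carrier G" using Fc b(2) by auto
  have "card (?mu ` (F \<times> H)) = card F * card H"
    using card_image[OF inj] by (simp add: card_cartesian_product)
  also have "\<dots> = card (carrier G)" using orderG cardF cardH by (simp add: order_def)
  finally have "?mu ` (F \<times> H) = carrier G" using card_subset_eq[OF fin sub] by simp
  then have "g \<in> ?mu ` (F \<times> H)" using g by simp
  then obtain fh where fh: "fh \<in> F \<times> H" "g = ?mu fh" by (rule imageE)
  obtain f h where "fh = (f, h)" by (cases fh)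
  then show ?thesis using fh by auto
qed

lemma F_inv: "f \<in> F \<Longrightarrow> inv f \<in> F"
  using subgroup.m_inv_closed[OF F_subgroup] .

lemma F_mult: "f \<in> F \<Longrightarrow> f' \<in> F \<Longrightarrow> f \<otimes> f' \<in> F"
  using subgroup.m_closed[OF F_subgroup] .

lemma Fc: "f \<in> F \<Longrightarrow> f \<in> carrier G"
  using F_sub by auto

lemma Hc: "h \<in> H \<Longrightarrow> h \<in> carrier G"
  using b(2) by auto

lemma H_inv: "h \<in> H \<Longrightarrow> inv h \<in> H"
  using subgroup.m_inv_closed[OF b(1)] .

lemma H_mult: "h \<in> H \<Longrightarrow> h' \<in> H \<Longrightarrow> h \<otimes> h' \<in> H"
  using subgroup.m_closed[OF b(1)] .

lemma HF_one: "h \<in> H \<Longrightarrow> h \<in> F \<Longrightarrow> h = \<one>"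
  using HF by auto

lemma core:
  assumes Qsub: "Q \<subseteq> F" and Qcase: "Q = {\<one>} \<or> Q \<in> S"
    and f: "f \<in> F" "f \<notin> Q" and h: "h0 \<in> H" "h1 \<in> H" "h2 \<in> H"
    and ha: "(f \<otimes> h0) \<otimes> h2 \<otimes> inv (f \<otimes> h0) \<otimes> inv h1 \<in> Q"
  shows "h1 = \<one>"
proof -
  have fc: "f \<in> carrier G" using Fc f by simp
  have hc: "h0 \<in> carrier G" "h1 \<in> carrier G" "h2 \<in> carrier G" using Hc h by auto
  define k where "k = h0 \<otimes> h2 \<otimes> inv h0"
  have kH: "k \<in> H" unfolding k_def using h H_mult H_inv by simp
  have kc: "k \<in> carrier G" using Hc kH by simp
  have eq1: "(f \<otimes> h0) \<otimes> h2 \<otimes> inv (f \<otimes> h0) = f \<otimes> k \<otimes> inv f"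
    unfolding k_def using fc hc by (simp add: m_assoc inv_mult_group)
  define a where "a = f \<otimes> k \<otimes> inv f \<otimes> inv h1"
  have aQ: "a \<in> Q" using ha unfolding eq1 a_def .
  have aF: "a \<in> F" using aQ Qsub by auto
  have ac: "a \<in> carrier G" using aF Fc by simp
  define c where "c = f \<otimes> (k \<otimes> inv f \<otimes> inv k)"
  have "k \<otimes> inv f \<otimes> inv k \<in> F"
    using F_normal normal_inv_iff kc F_inv[OF f(1)] by blast
  then have cF: "c \<in> F" unfolding c_def using F_mult f(1) by simp
  have cc: "c \<in> carrier G" using cF Fc by simp
  have "k \<otimes> inv h1 = inv c \<otimes> a"
    unfolding a_def c_def using fc kc hc by (simp add: m_assoc inv_mult_group)
  also have "\<dots> \<in> F" using cF aF F_inv F_mult by simp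
  finally have "k \<otimes> inv h1 \<in> F" .
  moreover have "k \<otimes> inv h1 \<in> H" using kH h H_mult H_inv by simp
  ultimately have e1: "k \<otimes> inv h1 = \<one>" using HF_one by simp
  have "k = (k \<otimes> inv h1) \<otimes> h1" using kc hc by (simp add: m_assoc)
  then have kh: "k = h1" using e1 hc by simp
  have "f \<noteq> \<one>" using f(2) Qcase subgroup.one_closed by auto
  then obtain R where R: "R \<in> S" "f \<in> R" using S_cover f(1) by blast
  have Rn: "R \<lhd> G" using S_normal R(1) .
  have "h1 \<otimes> inv f \<otimes> inv h1 \<in> R"
    using Rn normal_inv_iff hc R(2) subgroup.m_inv_closed[of R G] by blast
  then have aR: "a \<in> R"
    using R subgroup.m_closed[of R G] unfolding a_def kh using fc hc by (simp add: m_assoc)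
  have a1: "a = \<one>"
  proof (rule ccontr)
    assume "a \<noteq> \<one>"
    then have "Q \<noteq> {\<one>}" using aQ by auto
    then have "Q \<in> S" using Qcase by simp
    then have "R = Q" using S_meet[OF R(1) _ aR aQ \<open>a \<noteq> \<one>\<close>] by simp
    then show False using R(2) f(2) by simp
  qed
  have "f \<otimes> h1 \<otimes> inv f = a \<otimes> h1" unfolding a_def kh using fc hc by (simp add: m_assoc)
  then have fh: "f \<otimes> h1 \<otimes> inv f = h1" using a1 hc by simp
  have ifc: "inv f \<in> carrier G" using fc by simp
  have "h1 \<in> conj_set G (inv f) H" using mem_conj_iff[OF ifc b(2) hc(2)] fh fc h(2) by simp
  moreover have "inv f \<notin> H"
  proof
    assume "inv f \<in> H"
    then have "inv f = \<one>" using HF_one F_inv[OF f(1)] by simp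
    then have "f = \<one>" using fc by (metis inv_inv one_closed inv_one)
    then show False using \<open>f \<noteq> \<one>\<close> by simp
  qed
  ultimately show "h1 = \<one>" using b(5)[OF ifc] h(2) by blast
qed

context
  fixes Q assumes Qn: "Q \<lhd> G" and QF: "Q \<subseteq> F" and Qcase: "Q = {\<one>} \<or> Q \<in> S"
begin

abbreviation "pr \<equiv> (\<lambda>x. Q #> x)"
abbreviation "K \<equiv> pr ` H"

lemma sQ: "subgroup Q G" using normal_imp_subgroup[OF Qn] .

lemma Qconj: "x \<in> carrier G \<Longrightarrow> q \<in> Q \<Longrightarrow> x \<otimes> q \<otimes> inv x \<in> Q"
  using Qn by (simp add: normal_inv_iff)

lemma GQ: "group (G Mod Q)" using normal.factorgroup_is_group[OF Qn] .

lemma carrGQ: "carrier (G Mod Q) = pr ` carrier G" by (rule carrier_FactGroup)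

lemma pr_eq: "x \<in> carrier G \<Longrightarrow> y \<in> carrier G \<Longrightarrow> pr x = pr y \<longleftrightarrow> x \<otimes> inv y \<in> Q"
  using pi_eq[OF Qn] by blast

lemma pr_one: "pr \<one> = Q" using pi_one[OF Qn] .

lemma pr_Q: "x \<in> carrier G \<Longrightarrow> pr x = Q \<longleftrightarrow> x \<in> Q"
  using pr_eq[of x "\<one>"] pr_one by simp

lemma K_eq: "pr ` (H <#> Q) = K"
proof
  show "pr ` (H <#> Q) \<subseteq> K"
  proof
    fix y assume "y \<in> pr ` (H <#> Q)"
    then obtain h q where hq: "h \<in> H" "q \<in> Q" "y = pr (h \<otimes> q)" unfolding set_mult_def by auto
    have hc: "h \<in> carrier G" "q \<in> carrier G" using hq Hc subgroup.subset[OF sQ] by auto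
    have "(h \<otimes> q) \<otimes> inv h \<in> Q" using Qconj hc hq by simp
    then have "pr (h \<otimes> q) = pr h" using pr_eq hc by simp
    then show "y \<in> K" using hq by simp
  qed
  show "K \<subseteq> pr ` (H <#> Q)"
  proof
    fix y assume "y \<in> K"
    then obtain h where h: "h \<in> H" "y = pr h" by auto
    have "h = h \<otimes> \<one>" using Hc h by simp
    moreover have "\<one> \<in> Q" using subgroup.one_closed[OF sQ] .
    ultimately have "h \<in> H <#> Q" using h unfolding set_mult_def by blast
    then show "y \<in> pr ` (H <#> Q)" using h by simp
  qed
qed

lemma inj_pr: "inj_on pr H"
proof (rule inj_onI)
  fix x y assume a: "x \<in> H" "y \<in> H" "pr x = pr y"
  have c: "x \<in> carrier G" "y \<in> carrier G" using a Hc by auto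
  have "x \<otimes> inv y \<in> Q" using pr_eq c a by simp
  then have "x \<otimes> inv y \<in> F" using QF by auto
  moreover have "x \<otimes> inv y \<in> H" using a H_mult H_inv by simp
  ultimately have e: "x \<otimes> inv y = \<one>" using HF_one by simp
  have "x = (x \<otimes> inv y) \<otimes> y" using c by (simp add: m_assoc)
  then show "x = y" using e c by simp
qed

lemma cardQ: "card Q \<le> p" "card Q > 0"
proof -
  show "card Q \<le> p" using Qcase p_gt1 by auto
  show "card Q > 0" using finQ[OF sQ] subgroup.one_closed[OF sQ] card_gt_0_iff by blast
qed

lemma K_sub: "subgroup K (G Mod Q)"
proof -
  have "group_hom G (G Mod Q) pr"
    using GQ normal.r_coset_hom_Mod[OF Qn] by (simp add: group_hom_def group_hom_axioms_def is_group)
  then show ?thesis by (rule group_hom.subgroup_img_is_subgroup[OF _ b(1)])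
qed

lemma conjK: "g \<in> carrier G \<Longrightarrow> conj_set (G Mod Q) (pr g) K = (\<lambda>h. pr (g \<otimes> h \<otimes> inv g)) ` H"
  using conj_quot[OF Qn _ b(2)] by simp

lemma fcQ: "frobenius_complement (G Mod Q) K"
  unfolding frobenius_complement_def
proof (intro conjI ballI)
  show "group (G Mod Q)" by (rule GQ)
  show "subgroup K (G Mod Q)" by (rule K_sub)
  show "K \<noteq> {\<one>\<^bsub>G Mod Q\<^esub>}"
  proof
    assume KQ: "K = {\<one>\<^bsub>G Mod Q\<^esub>}"
    obtain h where h: "h \<in> H" "h \<noteq> \<one>" using b(3) subgroup.one_closed[OF b(1)] by blast
    have "pr h = Q" using KQ h by auto
    then have "h \<in> Q" using pr_Q Hc h by simp
    then have "h = \<one>" using QF HF_one h by auto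
    then show False using h by simp
  qed
  show "K \<noteq> carrier (G Mod Q)"
  proof
    assume KC: "K = carrier (G Mod Q)"
    have "\<not> F \<subseteq> Q"
    proof
      assume "F \<subseteq> Q"
      then have "card F \<le> card Q" using finQ[OF sQ] card_mono by blast
      moreover have "p < p * p" using p_gt1 by simp
      ultimately show False using cardF cardQ(1) by linarith
    qed
    then obtain f where f: "f \<in> F" "f \<notin> Q" by blast
    have fc: "f \<in> carrier G" using Fc f by simp
    have "pr f \<in> K" using KC carrGQ fc by simp
    then obtain h where h: "h \<in> H" "pr f = pr h" by auto
    have hc: "h \<in> carrier G" using Hc h by simp
    have "f \<otimes> inv h \<in> Q" using pr_eq fc hc h by simp
    then have fh: "f \<otimes> inv h \<in> F" using QF by auto
    have "inv h = inv f \<otimes> (f \<otimes> inv h)" using fc hc by simp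
    also have "\<dots> \<in> F" using fh F_inv f F_mult by simp
    finally have "inv (inv h) \<in> F" using F_inv by blast
    then have "h = \<one>" using HF_one h hc by simp
    then have "f \<in> Q" using \<open>f \<otimes> inv h \<in> Q\<close> fc by simp
    then show False using f by simp
  qed
  fix Xc assume Xc: "Xc \<in> carrier (G Mod Q) - K"
  then obtain g where g: "g \<in> carrier G" "Xc = pr g" using carrGQ by auto
  obtain f h0 where fh0: "f \<in> F" "h0 \<in> H" "g = f \<otimes> h0" using decomp[OF g(1)] by blast
  have fc: "f \<in> carrier G" "h0 \<in> carrier G" using fh0 Fc Hc by auto
  have fQ: "f \<notin> Q"
  proof
    assume "f \<in> Q"
    have "g \<otimes> inv h0 = f" using fh0 fc by (simp add: m_assoc)
    then have "pr g = pr h0" using pr_eq g fc \<open>f \<in> Q\<close> by simp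
    then show False using Xc g fh0 by auto
  qed
  show "K \<inter> conj_set (G Mod Q) Xc K = {\<one>\<^bsub>G Mod Q\<^esub>}"
  proof
    show "K \<inter> conj_set (G Mod Q) Xc K \<subseteq> {\<one>\<^bsub>G Mod Q\<^esub>}"
    proof
      fix Y assume Y: "Y \<in> K \<inter> conj_set (G Mod Q) Xc K"
      then obtain h1 h2 where h: "h1 \<in> H" "h2 \<in> H" "Y = pr h1" "Y = pr (g \<otimes> h2 \<otimes> inv g)"
        using conjK g by auto
      have hc: "h1 \<in> carrier G" "h2 \<in> carrier G" using h Hc by auto
      have "(g \<otimes> h2 \<otimes> inv g) \<otimes> inv h1 \<in> Q" using pr_eq h hc g by simp
      then have "h1 = \<one>" using core[OF QF Qcase fh0(1) fQ fh0(2) h(1) h(2)] fh0(3) by simp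
      then show "Y \<in> {\<one>\<^bsub>G Mod Q\<^esub>}" using h pr_one by simp
    qed
    have o: "\<one> \<in> H" using subgroup.one_closed[OF b(1)] .
    have "pr (g \<otimes> \<one> \<otimes> inv g) = Q" using g pr_one by simp
    then have "Q \<in> (\<lambda>h. pr (g \<otimes> h \<otimes> inv g)) ` H" using o by (metis image_eqI)
    then have q1: "Q \<in> conj_set (G Mod Q) Xc K" using conjK g by simp
    have q2: "Q \<in> K" using o pr_one by (metis image_eqI)
    show "{\<one>\<^bsub>G Mod Q\<^esub>} \<subseteq> K \<inter> conj_set (G Mod Q) Xc K"
      using q1 q2 by simp
  qed
qed

lemma isoQ: "(G Mod Q)\<lparr>carrier := K\<rparr> \<cong> G\<lparr>carrier := H\<rparr>"
proof -
  have "pr \<in> iso (G\<lparr>carrier := H\<rparr>) ((G Mod Q)\<lparr>carrier := K\<rparr>)"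
    unfolding iso_def hom_def
  proof (intro CollectI conjI)
    show "pr \<in> carrier (G\<lparr>carrier := H\<rparr>) \<rightarrow> carrier ((G Mod Q)\<lparr>carrier := K\<rparr>)" by auto
    show "\<forall>x\<in>carrier (G\<lparr>carrier := H\<rparr>). \<forall>y\<in>carrier (G\<lparr>carrier := H\<rparr>).
        pr (x \<otimes>\<^bsub>G\<lparr>carrier := H\<rparr>\<^esub> y) = pr x \<otimes>\<^bsub>(G Mod Q)\<lparr>carrier := K\<rparr>\<^esub> pr y"
      using pi_mult[OF Qn] Hc by simp
    show "bij_betw pr (carrier (G\<lparr>carrier := H\<rparr>)) (carrier ((G Mod Q)\<lparr>carrier := K\<rparr>))"
      using inj_pr by (simp add: bij_betw_def)
  qed
  then have "G\<lparr>carrier := H\<rparr> \<cong> (G Mod Q)\<lparr>carrier := K\<rparr>" by (rule is_isoI)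
  then show ?thesis by (rule group.iso_sym[OF subgroup.subgroup_is_group[OF b(1) is_group]])
qed

lemma kerQ: "frobenius_kernel (G Mod Q) K = pr ` F"
proof -
  have finGQ: "finite (carrier (G Mod Q))" using carrGQ fin by simp
  have c1: "card (frobenius_kernel (G Mod Q) K) * card K = order (G Mod Q)"
    by (rule group.frob_kernel_card[OF GQ finGQ fcQ])
  have cK: "card K = m" using card_image[OF inj_pr] cardH by simp
  have "order (G Mod Q) = card (rcosets Q)" by (simp add: order_def FactGroup_def)
  then have oGQ: "order (G Mod Q) * card Q = p * p * m" using lagrange[OF sQ] orderG by simp
  have "card (frobenius_kernel (G Mod Q) K) * card Q * m = (card (frobenius_kernel (G Mod Q) K) * card K) * card Q"
    using cK by (simp add: ac_simps)
  also have "\<dots> = order (G Mod Q) * card Q" using c1 by simp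
  also have "\<dots> = p * p * m" using oGQ .
  finally have "card (frobenius_kernel (G Mod Q) K) * card Q * m = p * p * m" .
  then have ck: "card (frobenius_kernel (G Mod Q) K) * card Q = p * p" using m_pos by simp
  interpret GF: group "G\<lparr>carrier := F\<rparr>" using subgroup.subgroup_is_group[OF F_subgroup is_group] .
  have sQF: "subgroup Q (G\<lparr>carrier := F\<rparr>)" by (rule subgroup_incl[OF sQ F_subgroup QF])
  have "rcosets\<^bsub>G\<lparr>carrier := F\<rparr>\<^esub> Q = pr ` F" by (auto simp: RCOSETS_def r_coset_def)
  then have "card (pr ` F) * card Q = p * p" using GF.lagrange[OF sQF] cardF by (simp add: order_def)
  then have "card (pr ` F) * card Q = card (frobenius_kernel (G Mod Q) K) * card Q" using ck by simp
  then have ceq: "card (pr ` F) = card (frobenius_kernel (G Mod Q) K)" using cardQ(2) by (simp only: mult_right_cancel)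
  have sub: "pr ` F \<subseteq> frobenius_kernel (G Mod Q) K"
  proof
    fix z assume "z \<in> pr ` F"
    then obtain f where f: "f \<in> F" "z = pr f" by auto
    have fc: "f \<in> carrier G" using Fc f by simp
    show "z \<in> frobenius_kernel (G Mod Q) K"
    proof (cases "f \<in> Q")
      case True
      then have "z = \<one>\<^bsub>G Mod Q\<^esub>" using f pr_Q fc by simp
      then show ?thesis unfolding frobenius_kernel_def by simp
    next
      case False
      have zc: "z \<in> carrier (G Mod Q)" using f fc carrGQ by simp
      have "z \<notin> conj_set (G Mod Q) Xc K" if Xc: "Xc \<in> carrier (G Mod Q)" for Xc
      proof
        assume zin: "z \<in> conj_set (G Mod Q) Xc K"
        obtain g where g: "g \<in> carrier G" "Xc = pr g" using Xc carrGQ by auto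
        obtain h where h: "h \<in> H" "z = pr (g \<otimes> h \<otimes> inv g)" using zin conjK g by auto
        define y where "y = g \<otimes> h \<otimes> inv g"
        have hc: "h \<in> carrier G" using Hc h by simp
        have yc: "y \<in> carrier G" using g hc by (simp add: y_def)
        have e: "pr f = pr y" using f(2) h(2) y_def by simp
        have fy: "f \<otimes> inv y \<in> Q" using e pr_eq[OF fc yc] by simp
        then have fyF: "f \<otimes> inv y \<in> F" using QF by auto
        have "y = inv (f \<otimes> inv y) \<otimes> f" using fc yc by (simp add: inv_mult_group m_assoc)
        also have "\<dots> \<in> F" using fyF f F_inv F_mult by simp
        finally have "y \<in> F" .
        then have ypow: "y [^] (p * p) = \<one>" using F_char by simp
        have "y \<in> conj_set G g H" using g h by (simp add: conj_set_eq y_def)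
        then have "y = \<one>" using not_conj[OF yc ypow coprime_ppm g(1)] by simp
        then have "f \<in> Q" using fy fc by simp
        then show False using False by simp
      qed
      then show ?thesis using zc unfolding frobenius_kernel_def by blast
    qed
  qed
  have "finite (frobenius_kernel (G Mod Q) K)" using finGQ unfolding frobenius_kernel_def by simp
  then show ?thesis using card_subset_eq[OF _ sub ceq] by simp
qed

end

end

theorem lemma5p2:
  fixes G :: "('a, 'b) monoid_scheme" and H :: "'a set" and p m :: nat
  assumes "Factorial_Ring.prime p" and "odd p"
    and "group G" and "finite (carrier G)"
    and "frobenius_complement G H"
    and "metabelian G"
    and "G\<lparr>carrier := frobenius_kernel G H\<rparr> \<cong> integer_mod_group p \<times>\<times> integer_mod_group p"
    and "cyclic_group (G\<lparr>carrier := H\<rparr>)" and "card H = m" and "m dvd p - 1"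
    and "card (subgroup_classes_of_order G p) = p + 1"
  shows "(\<forall>Q. (Q = {\<one>\<^bsub>G\<^esub>} \<or> Q = frobenius_kernel G H \<or>
              (subgroup Q G \<and> Q \<subseteq> frobenius_kernel G H \<and> card Q = p)) \<longrightarrow>
            normalizer G Q = carrier G \<and>
            G\<lparr>carrier := normalizer G Q\<rparr> Mod Q = G Mod Q) \<and>
         (\<forall>Q. (Q = {\<one>\<^bsub>G\<^esub>} \<or> (subgroup Q G \<and> Q \<subseteq> frobenius_kernel G H \<and> card Q = p)) \<longrightarrow>
            frobenius_complement (G Mod Q) ((\<lambda>x. Q #>\<^bsub>G\<^esub> x) ` (H <#>\<^bsub>G\<^esub> Q)) \<and>
            (G Mod Q)\<lparr>carrier := (\<lambda>x. Q #>\<^bsub>G\<^esub> x) ` (H <#>\<^bsub>G\<^esub> Q)\<rparr> \<cong> G\<lparr>carrier := H\<rparr> \<and>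
            frobenius_kernel (G Mod Q) ((\<lambda>x. Q #>\<^bsub>G\<^esub> x) ` (H <#>\<^bsub>G\<^esub> Q))
              = (\<lambda>x. Q #>\<^bsub>G\<^esub> x) ` frobenius_kernel G H)"
proof -
  interpret L: frobL G H p m
    unfolding frobL_def frobL_axioms_def using assms by simp
  have partA: "\<And>Q. Q = {\<one>\<^bsub>G\<^esub>} \<or> Q = frobenius_kernel G H \<or>
              (subgroup Q G \<and> Q \<subseteq> frobenius_kernel G H \<and> card Q = p) \<Longrightarrow>
            normalizer G Q = carrier G \<and>
            G\<lparr>carrier := normalizer G Q\<rparr> Mod Q = G Mod Q"
  proof -
    fix Q assume a: "Q = {\<one>\<^bsub>G\<^esub>} \<or> Q = frobenius_kernel G H \<or>
              (subgroup Q G \<and> Q \<subseteq> frobenius_kernel G H \<and> card Q = p)"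
    have "Q \<lhd> G"
    proof (cases "Q = {\<one>\<^bsub>G\<^esub>}")
      case True then show ?thesis using L.one_is_normal by simp
    next
      case False
      note F1 = False
      show ?thesis
      proof (cases "Q = frobenius_kernel G H")
        case True then show ?thesis using L.F_normal by simp
      next
        case False
        then have "Q \<in> {Q. subgroup Q G \<and> card Q = p}" using a F1 by simp
        then show ?thesis by (rule L.S_normal)
      qed
    qed
    then have "normalizer G Q = carrier G" by (rule L.normal_normalizer)
    then show "normalizer G Q = carrier G \<and> G\<lparr>carrier := normalizer G Q\<rparr> Mod Q = G Mod Q" by simp
  qed
  have partB: "\<And>Q. Q = {\<one>\<^bsub>G\<^esub>} \<or> (subgroup Q G \<and> Q \<subseteq> frobenius_kernel G H \<and> card Q = p) \<Longrightarrow>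
            frobenius_complement (G Mod Q) ((\<lambda>x. Q #>\<^bsub>G\<^esub> x) ` (H <#>\<^bsub>G\<^esub> Q)) \<and>
            (G Mod Q)\<lparr>carrier := (\<lambda>x. Q #>\<^bsub>G\<^esub> x) ` (H <#>\<^bsub>G\<^esub> Q)\<rparr> \<cong> G\<lparr>carrier := H\<rparr> \<and>
            frobenius_kernel (G Mod Q) ((\<lambda>x. Q #>\<^bsub>G\<^esub> x) ` (H <#>\<^bsub>G\<^esub> Q))
              = (\<lambda>x. Q #>\<^bsub>G\<^esub> x) ` frobenius_kernel G H"
  proof -
    fix Q assume a: "Q = {\<one>\<^bsub>G\<^esub>} \<or> (subgroup Q G \<and> Q \<subseteq> frobenius_kernel G H \<and> card Q = p)"
    have Qcase: "Q = {\<one>\<^bsub>G\<^esub>} \<or> Q \<in> {Q. subgroup Q G \<and> card Q = p}" using a by auto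
    have Qn: "Q \<lhd> G"
    proof (cases "Q = {\<one>\<^bsub>G\<^esub>}")
      case True then show ?thesis using L.one_is_normal by simp
    next
      case False
      then have "Q \<in> {Q. subgroup Q G \<and> card Q = p}" using a by simp
      then show ?thesis by (rule L.S_normal)
    qed
    have QF: "Q \<subseteq> frobenius_kernel G H"
    proof (cases "Q = {\<one>\<^bsub>G\<^esub>}")
      case True then show ?thesis using subgroup.one_closed[OF L.F_subgroup] by simp
    next
      case False
      then show ?thesis using a by simp
    qed
    have KE: "(\<lambda>x. Q #>\<^bsub>G\<^esub> x) ` (H <#>\<^bsub>G\<^esub> Q) = (\<lambda>x. Q #>\<^bsub>G\<^esub> x) ` H"
      by (rule L.K_eq[OF Qn QF Qcase])
    show "frobenius_complement (G Mod Q) ((\<lambda>x. Q #>\<^bsub>G\<^esub> x) ` (H <#>\<^bsub>G\<^esub> Q)) \<and>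
            (G Mod Q)\<lparr>carrier := (\<lambda>x. Q #>\<^bsub>G\<^esub> x) ` (H <#>\<^bsub>G\<^esub> Q)\<rparr> \<cong> G\<lparr>carrier := H\<rparr> \<and>
            frobenius_kernel (G Mod Q) ((\<lambda>x. Q #>\<^bsub>G\<^esub> x) ` (H <#>\<^bsub>G\<^esub> Q))
              = (\<lambda>x. Q #>\<^bsub>G\<^esub> x) ` frobenius_kernel G H"
      unfolding KE using L.fcQ[OF Qn QF Qcase] L.isoQ[OF Qn QF Qcase] L.kerQ[OF Qn QF Qcase] by simp
  qed
  show ?thesis using partA partB by blast
qed

end
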